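(* Let $\psi$ be a real function defined on a set containing $(-\infty,0]$ with $\psi \in \mathrm{BT}(\mathbb{R}_-)$. Then $$\{\mathrm{id} - f : f \in \mathrm{Sol}(\psi)\} = \mathrm{Sol}(\mathrm{id}-\psi) \quad\text{and}\quad \{\mathrm{id} - f : f \in \mathrm{Sol}^\#(\psi)\} = \mathrm{Sol}^\#(\mathrm{id}-\psi),$$ where $\mathrm{id} - f$ denotes $x \mapsto x - f(x)$.
   Context: $\mathbb{R}_- = (-\infty,0]$. For $I \in \{\mathbb{R}_-, \mathbb{R}\}$ and $g : D \subseteq \mathbb{R} \to \mathbb{R}$, $g \in \mathrm{BT}(I)$ means $I \subseteq D$ and $xg(x) \ge 0$, $x(x-g(x)) \ge 0$ for all $x \in I$; $g \in \mathrm{BT}^\#(I)$ means additionally both inequalities are strict for $x \in I$, $x \ne 0$ (nothing is required of $g(0)$). For $\psi \in \mathrm{BT}(\mathbb{R}_-)$, $\mathrm{Sol}(\psi)$ is the set of functions $f \in \mathrm{BT}(\mathbb{R})$ such that $f(x) = \psi(x)$ for all $x \le 0$ and $f(f(-x)+x) = f(-f(x)) + f(x)$ for all $x \in \mathbb{R}$; $\mathrm{Sol}^\#(\psi) := \mathrm{Sol}(\psi) \cap \mathrm{BT}^\#(\mathbb{R})$. *)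

theory Defs
  imports Complex_Main
begin

definition Rminus :: "real set" where
  "Rminus = {..0}"

definition BT :: "real set \<Rightarrow> (real \<Rightarrow> real) \<Rightarrow> bool" where
  "BT I g \<longleftrightarrow> (\<forall>x\<in>I. x * g x \<ge> 0 \<and> x * (x - g x) \<ge> 0)"

definition BT_sharp :: "real set \<Rightarrow> (real \<Rightarrow> real) \<Rightarrow> bool" where
  "BT_sharp I g \<longleftrightarrow> BT I g \<and>
     (\<forall>x\<in>I. x \<noteq> 0 \<longrightarrow> x * g x > 0 \<and> x * (x - g x) > 0)"

definition Sol :: "(real \<Rightarrow> real) \<Rightarrow> (real \<Rightarrow> real) set" where
  "Sol \<psi> = {f. BT UNIV f \<and> (\<forall>x\<le>0. f x = \<psi> x) \<and>
                (\<forall>x. f (f (-x) + x) = f (- f x) + f x)}"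

definition Sol_sharp :: "(real \<Rightarrow> real) \<Rightarrow> (real \<Rightarrow> real) set" where
  "Sol_sharp \<psi> = Sol \<psi> \<inter> {f. BT_sharp UNIV f}"

end

theory Submission
  imports Defs
begin

lemma sol_map:
  assumes "f \<in> Sol \<phi>"
  shows "(\<lambda>x. x - f x) \<in> Sol (\<lambda>x. x - \<phi> x)"
proof -
  have bt: "BT UNIV f" and ps: "\<forall>x\<le>0. f x = \<phi> x"
    and eq: "\<forall>x. f (f (-x) + x) = f (- f x) + f x"
    using assms by (auto simp: Sol_def)
  have "BT UNIV (\<lambda>x. x - f x)" using bt by (auto simp: BT_def)
  moreover have "\<forall>x. (\<lambda>x. x - f x) ((\<lambda>x. x - f x) (-x) + x)
      = (\<lambda>x. x - f x) (- (\<lambda>x. x - f x) x) + (\<lambda>x. x - f x) x"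
  proof
    fix x :: real
    have "f (f (- (-x)) + (-x)) = f (- f (-x)) + f (-x)" using eq by blast
    then show "(\<lambda>x. x - f x) ((\<lambda>x. x - f x) (-x) + x)
      = (\<lambda>x. x - f x) (- (\<lambda>x. x - f x) x) + (\<lambda>x. x - f x) x"
      by (simp add: algebra_simps)
  qed
  ultimately show ?thesis using ps by (simp add: Sol_def)
qed

lemma sharp_map:
  assumes "f \<in> Sol_sharp \<phi>"
  shows "(\<lambda>x. x - f x) \<in> Sol_sharp (\<lambda>x. x - \<phi> x)"
  using assms sol_map[of f \<phi>] by (auto simp: Sol_sharp_def BT_sharp_def BT_def)

lemma inv_id: "(\<lambda>x. x - (x - \<phi> x)) = (\<phi>::real\<Rightarrow>real)"
  by auto

lemma image_eq:
  fixes S :: "(real \<Rightarrow> real) \<Rightarrow> (real \<Rightarrow> real) set" and \<psi> :: "real \<Rightarrow> real"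
  assumes "\<And>f \<phi>. f \<in> S \<phi> \<Longrightarrow> (\<lambda>x::real. x - f x) \<in> S (\<lambda>x. x - \<phi> x)"
  shows "(\<lambda>f x. x - f x) ` S \<psi> = S (\<lambda>x. x - \<psi> x)"
proof
  show "(\<lambda>f x. x - f x) ` S \<psi> \<subseteq> S (\<lambda>x. x - \<psi> x)" using assms by auto
  show "S (\<lambda>x. x - \<psi> x) \<subseteq> (\<lambda>f x. x - f x) ` S \<psi>"
  proof
    fix g assume "g \<in> S (\<lambda>x. x - \<psi> x)"
    have e: "(\<lambda>x. x - (x - \<psi> x)) = \<psi>" by auto
    from \<open>g \<in> S (\<lambda>x. x - \<psi> x)\<close> have "(\<lambda>x. x - g x) \<in> S (\<lambda>x. x - (x - \<psi> x))" by (rule assms)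
    then have "(\<lambda>x. x - g x) \<in> S \<psi>" by (simp only: e)
    moreover have "g = (\<lambda>x. x - (\<lambda>x. x - g x) x)" by auto
    ultimately show "g \<in> (\<lambda>f x. x - f x) ` S \<psi>" by (intro image_eqI[where x="\<lambda>x. x - g x"]) auto
  qed
qed

theorem proposition1:
  fixes \<psi> :: "real \<Rightarrow> real"
  assumes "BT Rminus \<psi>"
  shows "(\<lambda>f x. x - f x) ` Sol \<psi> = Sol (\<lambda>x. x - \<psi> x)
       \<and> (\<lambda>f x. x - f x) ` Sol_sharp \<psi> = Sol_sharp (\<lambda>x. x - \<psi> x)"
  using image_eq[of Sol, OF sol_map] image_eq[of Sol_sharp, OF sharp_map] by blast

end
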